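(* Let $G$ be a connected BDH graph with color classes $X$ and $Y$. Then there exists an arborescence $A$ whose arc set is in bijection with $X$, say via $x\mapsto\phi x$, such that for every $y\in Y$ the set $\{\phi x\mid x\in N(y)\}$ is the arc set of a directed path in $A$.
   Context: An arborescence is a directed tree with a root $r$ such that every other node is reachable from $r$ by a directed path. A graph is distance hereditary if distances in every connected induced subgraph equal distances in the graph; BDH means bipartite distance hereditary (equivalently: bipartite, no induced chordless cycle of length $\ge6$, no induced domino, a domino being $C_6$ plus a chord between antipodal vertices). $N(y)$ is the neighborhood of $y$. *)

theory Defs
  imports Main
begin

definition simple_graph :: "'a set \<Rightarrow> ('a \<Rightarrow> 'a \<Rightarrow> bool) \<Rightarrow> bool" where
  "simple_graph V E \<longleftrightarrow> finite V \<and> (\<forall>u v. E u v \<longrightarrow> u \<in> V \<and> v \<in> V \<and> u \<noteq> v \<and> E v u)"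

definition walk_in :: "('a \<Rightarrow> 'a \<Rightarrow> bool) \<Rightarrow> 'a set \<Rightarrow> 'a list \<Rightarrow> 'a \<Rightarrow> 'a \<Rightarrow> bool" where
  "walk_in E S p u v \<longleftrightarrow> p \<noteq> [] \<and> hd p = u \<and> last p = v \<and> set p \<subseteq> S \<and>
     (\<forall>i. Suc i < length p \<longrightarrow> E (p ! i) (p ! Suc i))"

definition connected_on :: "('a \<Rightarrow> 'a \<Rightarrow> bool) \<Rightarrow> 'a set \<Rightarrow> bool" where
  "connected_on E S \<longleftrightarrow> (\<forall>u\<in>S. \<forall>v\<in>S. \<exists>p. walk_in E S p u v)"

definition dist_in :: "('a \<Rightarrow> 'a \<Rightarrow> bool) \<Rightarrow> 'a set \<Rightarrow> 'a \<Rightarrow> 'a \<Rightarrow> nat" where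
  "dist_in E S u v = (LEAST n. \<exists>p. walk_in E S p u v \<and> length p = Suc n)"

definition connected_graph :: "'a set \<Rightarrow> ('a \<Rightarrow> 'a \<Rightarrow> bool) \<Rightarrow> bool" where
  "connected_graph V E \<longleftrightarrow> simple_graph V E \<and> connected_on E V"

definition distance_hereditary :: "'a set \<Rightarrow> ('a \<Rightarrow> 'a \<Rightarrow> bool) \<Rightarrow> bool" where
  "distance_hereditary V E \<longleftrightarrow> simple_graph V E \<and>
     (\<forall>S. S \<subseteq> V \<longrightarrow> connected_on E S \<longrightarrow>
        (\<forall>u\<in>S. \<forall>v\<in>S. dist_in E S u v = dist_in E V u v))"

definition bipartite :: "'a set \<Rightarrow> ('a \<Rightarrow> 'a \<Rightarrow> bool) \<Rightarrow> bool" where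
  "bipartite V E \<longleftrightarrow> (\<exists>X Y. X \<union> Y = V \<and> X \<inter> Y = {} \<and>
      (\<forall>u v. E u v \<longrightarrow> (u \<in> X \<and> v \<in> Y) \<or> (u \<in> Y \<and> v \<in> X)))"

definition BDH :: "'a set \<Rightarrow> ('a \<Rightarrow> 'a \<Rightarrow> bool) \<Rightarrow> bool" where
  "BDH V E \<longleftrightarrow> bipartite V E \<and> distance_hereditary V E"

definition color_classes :: "'a set \<Rightarrow> ('a \<Rightarrow> 'a \<Rightarrow> bool) \<Rightarrow> 'a set \<Rightarrow> 'a set \<Rightarrow> bool" where
  "color_classes V E X Y \<longleftrightarrow> X \<union> Y = V \<and> X \<inter> Y = {} \<and>
      (\<forall>u v. E u v \<longrightarrow> (u \<in> X \<and> v \<in> Y) \<or> (u \<in> Y \<and> v \<in> X))"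

definition nbhd :: "'a set \<Rightarrow> ('a \<Rightarrow> 'a \<Rightarrow> bool) \<Rightarrow> 'a \<Rightarrow> 'a set" where
  "nbhd V E y = {x \<in> V. E y x}"

definition arborescence :: "'b set \<Rightarrow> ('b \<times> 'b) set \<Rightarrow> 'b \<Rightarrow> bool" where
  "arborescence W R r \<longleftrightarrow> finite W \<and> r \<in> W \<and> R \<subseteq> W \<times> W \<and>
     (\<forall>w\<in>W. (r, w) \<in> R\<^sup>*) \<and>
     (\<forall>u. (u, r) \<notin> R) \<and>
     (\<forall>w\<in>W. w \<noteq> r \<longrightarrow> (\<exists>!u. (u, w) \<in> R))"

definition dipath_arcs :: "'b set \<Rightarrow> ('b \<times> 'b) set \<Rightarrow> ('b \<times> 'b) set \<Rightarrow> bool" where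
  "dipath_arcs W R P \<longleftrightarrow> (\<exists>vs. vs \<noteq> [] \<and> distinct vs \<and> set vs \<subseteq> W \<and>
     (\<forall>i. Suc i < length vs \<longrightarrow> (vs ! i, vs ! Suc i) \<in> R) \<and>
     P = {(vs ! i, vs ! Suc i) | i. Suc i < length vs})"

end

theory Submission
  imports Defs
begin


lemma walk_single: "x \<in> S \<Longrightarrow> walk_in E S [x] x x"
  by (simp add: walk_in_def)

lemma walk_rev:
  assumes sym: "\<And>x y. E x y \<Longrightarrow> E y x" and w: "walk_in E S p u v"
  shows "walk_in E S (rev p) v u"
  unfolding walk_in_def
proof (intro conjI allI impI)
  show "rev p \<noteq> []" "hd (rev p) = v" "last (rev p) = u" "set (rev p) \<subseteq> S"
    using w by (auto simp: walk_in_def hd_rev last_rev)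
  fix i assume i: "Suc i < length (rev p)"
  have "E (p ! (length p - Suc (Suc i))) (p ! Suc (length p - Suc (Suc i)))"
    using w i unfolding walk_in_def by auto
  moreover have "Suc (length p - Suc (Suc i)) = length p - Suc i" using i by simp
  ultimately show "E (rev p ! i) (rev p ! Suc i)"
    using i sym by (simp add: rev_nth)
qed

lemma walk_append:
  assumes p: "walk_in E S p u v" and q: "walk_in E S q v w"
  shows "walk_in E S (p @ tl q) u w"
  unfolding walk_in_def
proof (intro conjI allI impI)
  show "p @ tl q \<noteq> []" "hd (p @ tl q) = u" using p by (auto simp: walk_in_def)
  show "last (p @ tl q) = w"
    using p q unfolding walk_in_def
    by (cases q) (auto simp: last_append)
  show "set (p @ tl q) \<subseteq> S" using p q unfolding walk_in_def
    by (cases q) auto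
  fix i assume i: "Suc i < length (p @ tl q)"
  consider "Suc i < length p" | "Suc i = length p" | "Suc i > length p" by linarith
  then show "E ((p @ tl q) ! i) ((p @ tl q) ! Suc i)"
  proof cases
    case 1 then show ?thesis using p by (simp add: walk_in_def nth_append)
  next
    case 2
    have "p ! i = last p" using 2 p by (metis diff_Suc_1 last_conv_nth walk_in_def)
    then have "(p @ tl q) ! i = last p" using 2 by (simp add: nth_append)
    moreover have "(p @ tl q) ! Suc i = q ! 1" using 2 i q
      by (cases q) (auto simp: walk_in_def nth_append)
    moreover have "Suc 0 < length q" using 2 i by auto
    ultimately show ?thesis using p q unfolding walk_in_def
      by (metis hd_conv_nth One_nat_def)
  next
    case 3
    then obtain j where j: "i = length p + j" by (metis less_imp_Suc_add add_Suc_right less_Suc_eq_le le_Suc_ex)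
    have "(p @ tl q) ! i = q ! Suc j" "(p @ tl q) ! Suc i = q ! Suc (Suc j)"
      using j i q by (auto simp: nth_append nth_tl walk_in_def)
    moreover have "Suc (Suc j) < length q" using i j by auto
    ultimately show ?thesis using q by (simp add: walk_in_def)
  qed
qed

lemma walk_take:
  assumes p: "walk_in E S p u v" and i: "i < length p"
  shows "walk_in E S (take (Suc i) p) u (p ! i)"
  unfolding walk_in_def
proof (intro conjI allI impI)
  show "take (Suc i) p \<noteq> []" "hd (take (Suc i) p) = u" using p by (auto simp: walk_in_def)
  show "last (take (Suc i) p) = p ! i" by (simp add: take_Suc_conv_app_nth[OF i])
  show "set (take (Suc i) p) \<subseteq> S" using p by (auto simp: walk_in_def dest: in_set_takeD)
  fix j assume "Suc j < length (take (Suc i) p)"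
  then show "E (take (Suc i) p ! j) (take (Suc i) p ! Suc j)" using p by (auto simp: walk_in_def nth_take)
qed

lemma walk_mono: "walk_in E S p u v \<Longrightarrow> S \<subseteq> T \<Longrightarrow> walk_in E T p u v"
  by (auto simp: walk_in_def)

lemma walk_set: "walk_in E S p u v \<Longrightarrow> set p \<subseteq> T \<Longrightarrow> walk_in E T p u v"
  by (auto simp: walk_in_def)

lemma walk_snoc:
  assumes "walk_in E S p u v" "E v w" "w \<in> S"
  shows "walk_in E S (p @ [w]) u w"
proof -
  have "walk_in E S [v, w] v w" using assms by (auto simp: walk_in_def less_Suc_eq)
  from walk_append[OF assms(1) this] show ?thesis by simp
qed

lemma walk_nth_in: "walk_in E S p u v \<Longrightarrow> i < length p \<Longrightarrow> p ! i \<in> S"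
  by (auto simp: walk_in_def)

lemma walk_ends: "walk_in E S p u v \<Longrightarrow> u \<in> S \<and> v \<in> S"
  by (auto simp: walk_in_def)

lemma connected_by_walk:
  assumes sym: "\<And>x y. E x y \<Longrightarrow> E y x"
  and c: "\<And>x. x \<in> S \<Longrightarrow> \<exists>p. walk_in E S p u x"
  shows "connected_on E S"
  unfolding connected_on_def
proof (intro ballI)
  fix x y assume "x \<in> S" "y \<in> S"
  then obtain p q where "walk_in E S p u x" "walk_in E S q u y" using c by blast
  have "walk_in E S (rev p) x u" using walk_rev[where E=E, OF sym \<open>walk_in E S p u x\<close>] .
  from walk_append[OF this \<open>walk_in E S q u y\<close>] show "\<exists>p. walk_in E S p x y" by blast
qed

lemma connected_by_list:
  assumes sym: "\<And>x y. E x y \<Longrightarrow> E y x"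
  and p: "walk_in E S p u v" and S: "set p = S"
  shows "connected_on E S"
proof (rule connected_by_walk[OF sym])
  fix x assume "x \<in> S"
  then obtain i where "i < length p" "x = p ! i" using S by (metis in_set_conv_nth)
  then show "\<exists>q. walk_in E S q u x" using walk_take[OF p] by blast
qed

lemma dist_le:
  assumes "walk_in E S p u v"
  shows "dist_in E S u v \<le> length p - 1"
proof -
  have "\<exists>q. walk_in E S q u v \<and> length q = Suc (length p - 1)"
    using assms by (auto simp: walk_in_def)
  then show ?thesis unfolding dist_in_def by (rule Least_le)
qed

lemma dist_walk:
  assumes "connected_on E S" "u \<in> S" "v \<in> S"
  shows "\<exists>p. walk_in E S p u v \<and> length p = Suc (dist_in E S u v)"
proof -
  obtain p where p: "walk_in E S p u v" using assms by (auto simp: connected_on_def)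
  then have "\<exists>n q. walk_in E S q u v \<and> length q = Suc n"
    by (intro exI[of _ "length p - 1"] exI[of _ p]) (auto simp: walk_in_def)
  then show ?thesis unfolding dist_in_def by (rule LeastI_ex)
qed

lemma potential:
  assumes p: "walk_in E S p u v"
  and f: "\<And>x y. x \<in> S \<Longrightarrow> y \<in> S \<Longrightarrow> E x y \<Longrightarrow> f y \<le> f x + (1::int)"
  shows "f v \<le> f u + int (length p - 1)"
proof -
  have "\<forall>i. i < length p \<longrightarrow> f (p ! i) \<le> f u + int i"
  proof (intro allI)
    fix i show "i < length p \<longrightarrow> f (p ! i) \<le> f u + int i"
    proof (induction i)
      case 0 then show ?case using p by (auto simp: walk_in_def hd_conv_nth)
    next
      case (Suc i)
      show ?case
      proof
        assume "Suc i < length p"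
        then have "E (p ! i) (p ! Suc i)" "p ! i \<in> S" "p ! Suc i \<in> S"
          using p by (auto simp: walk_in_def)
        then have "f (p ! Suc i) \<le> f (p ! i) + 1" using f by blast
        then show "f (p ! Suc i) \<le> f u + int (Suc i)" using Suc \<open>Suc i < length p\<close> by simp
      qed
    qed
  qed
  moreover have "v = p ! (length p - 1)" "length p - 1 < length p"
    using p by (auto simp: walk_in_def last_conv_nth)
  ultimately show ?thesis by metis
qed

lemma dist_lower:
  assumes "connected_on E S" "u \<in> S" "v \<in> S"
  and f: "\<And>x y. x \<in> S \<Longrightarrow> y \<in> S \<Longrightarrow> E x y \<Longrightarrow> f y \<le> f x + (1::int)"
  shows "f v \<le> f u + int (dist_in E S u v)"
proof -
  obtain p where "walk_in E S p u v" "length p = Suc (dist_in E S u v)"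
    using dist_walk[OF assms(1-3)] by blast
  with potential[OF this(1) f] show ?thesis by simp
qed



locale bdhg =
  fixes V :: "'a set" and E X Y u
  assumes cg: "connected_graph V E" and bdh: "BDH V E" and cc: "color_classes V E X Y"
    and u: "u \<in> V"
begin

definition d where "d x = dist_in E V u x"

lemma sym: "E x y \<Longrightarrow> E y x" and irr: "\<not> E x x" and inV: "E x y \<Longrightarrow> x \<in> V \<and> y \<in> V"
  and finV: "finite V"
  using cg by (auto simp: connected_graph_def simple_graph_def)

lemma conn: "connected_on E V" using cg by (simp add: connected_graph_def)

lemma dh: "S \<subseteq> V \<Longrightarrow> connected_on E S \<Longrightarrow> a \<in> S \<Longrightarrow> b \<in> S \<Longrightarrow> dist_in E S a b = dist_in E V a b"
  using bdh by (auto simp: BDH_def distance_hereditary_def)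

lemma dwalk: "x \<in> V \<Longrightarrow> \<exists>p. walk_in E V p u x \<and> length p = Suc (d x)"
  using dist_walk[OF conn u] by (simp add: d_def)

lemma d_le: "walk_in E V p u x \<Longrightarrow> d x \<le> length p - 1"
  using dist_le by (simp add: d_def)

lemma d_nth: "walk_in E V p u x \<Longrightarrow> i < length p \<Longrightarrow> d (p ! i) \<le> i"
  using d_le[OF walk_take] by fastforce

lemma d_u: "d u = 0"
  using d_le[OF walk_single[OF u]] by simp

lemma d_lip: assumes "E x y" shows "d y \<le> d x + 1"
proof -
  obtain p where "walk_in E V p u x" "length p = Suc (d x)" using dwalk inV assms by blast
  from d_le[OF walk_snoc[OF this(1) assms]] this(2) inV assms show ?thesis by simp
qed

lemma d0: "x \<in> V \<Longrightarrow> d x = 0 \<Longrightarrow> x = u"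
  using dwalk by (fastforce simp: walk_in_def length_Suc_conv)

lemma parity:
  assumes p: "walk_in E V p a b"
  shows "i < length p \<Longrightarrow> (p ! i \<in> X) = ((a \<in> X) = even i)"
proof (induction i)
  case 0 then show ?case using p by (auto simp: walk_in_def hd_conv_nth)
next
  case (Suc i)
  then have "E (p ! i) (p ! Suc i)" using p by (auto simp: walk_in_def)
  then have "(p ! Suc i \<in> X) = (p ! i \<notin> X)" using cc by (auto simp: color_classes_def)
  with Suc show ?case by auto
qed

lemma d_parity: "x \<in> V \<Longrightarrow> (x \<in> X) = ((u \<in> X) = even (d x))"
proof -
  assume "x \<in> V"
  then obtain p where p: "walk_in E V p u x" "length p = Suc (d x)" using dwalk by blast
  have "x = p ! d x" using p by (metis diff_Suc_1 last_conv_nth walk_in_def)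
  with parity[OF p(1), of "d x"] p(2) show ?thesis by simp
qed

lemma d_adj: assumes "E x y" shows "d y = d x + 1 \<or> d x = d y + 1"
proof -
  have "(y \<in> X) = (x \<notin> X)" using cc assms by (auto simp: color_classes_def)
  then have "d x \<noteq> d y" using d_parity inV assms by metis
  moreover have "d y \<le> d x + 1" "d x \<le> d y + 1" using d_lip sym assms by auto
  ultimately show ?thesis by linarith
qed

lemma pred: assumes "x \<in> V" "d x > 0" shows "\<exists>t. E t x \<and> d t + 1 = d x"
proof -
  obtain p where p: "walk_in E V p u x" "length p = Suc (d x)" using dwalk assms by blast
  define t where "t = p ! (d x - 1)"
  have "Suc (d x - 1) < length p" "Suc (d x - 1) = d x" using p assms by auto
  then have "E t (p ! d x)" using p(1) unfolding walk_in_def t_def by metis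
  moreover have "p ! d x = x" using p by (metis diff_Suc_1 last_conv_nth walk_in_def)
  moreover have "d t \<le> d x - 1" using d_nth[OF p(1)] p t_def by simp
  ultimately show ?thesis using d_adj by fastforce
qed

end


context bdhg begin

lemma up:
  assumes av: "E a v" and bv: "E b v" and da: "d a = j" and db: "d b = j" and dv: "d v = Suc j"
    and as: "E a s" and ds: "d s + 1 = j"
  shows "E b s"
proof (rule ccontr)
  assume nbs: "\<not> E b s"
  have V: "a \<in> V" "b \<in> V" "v \<in> V" "s \<in> V" using inV av bv as by auto
  obtain Q where Q: "walk_in E V Q u s" "length Q = Suc (d s)" using dwalk V by blast
  have P1: "walk_in E V (Q @ [a]) u a" using walk_snoc[OF Q(1) sym[OF as]] V by simp
  have P2: "walk_in E V ((Q @ [a]) @ [v]) u v" using walk_snoc[OF P1 av] V by simp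
  have P: "walk_in E V (((Q @ [a]) @ [v]) @ [b]) u b" using walk_snoc[OF P2 sym[OF bv]] V by simp
  define S where "S = set (((Q @ [a]) @ [v]) @ [b])"
  have SV: "S \<subseteq> V" using P by (simp add: S_def walk_in_def)
  have PS: "walk_in E S (((Q @ [a]) @ [v]) @ [b]) u b" using walk_set[OF P] S_def by blast
  have cS: "connected_on E S" using connected_by_list[where E=E, OF sym PS] S_def by blast
  have uS: "u \<in> S" "b \<in> S" using PS walk_ends by fastforce+
  define f where "f x = (if x = b then int j + 2 else int (d x))" for x
  have lip: "f y \<le> f x + 1" if "x \<in> S" "y \<in> S" "E x y" for x y
  proof (cases "y = b")
    case True
    then have xb: "x \<noteq> b" using irr that by blast
    have "x \<in> set Q \<or> x = a \<or> x = v" using that xb by (auto simp: S_def)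
    moreover have "x \<noteq> a" using d_adj[of a b] da db that True by auto
    moreover have "x \<notin> set Q"
    proof
      assume "x \<in> set Q"
      then obtain i where i: "i < length Q" "x = Q ! i" by (metis in_set_conv_nth)
      have "d x \<le> i" using d_nth[OF Q(1) i(1)] i by simp
      then have "d x + 1 = j" using d_adj[OF that(3)] True db i Q ds by auto
      then have "i = length Q - 1" using \<open>d x \<le> i\<close> i Q ds by auto
      then have "x = s" using i Q(1) by (metis last_conv_nth walk_in_def)
      then show False using nbs sym that True by blast
    qed
    ultimately have "x = v" by blast
    then show ?thesis using True dv xb by (simp add: f_def)
  next
    case False
    then show ?thesis using d_lip[OF that(3)] db by (auto simp: f_def)
  qed
  have "f b \<le> f u + int (dist_in E S u b)" using dist_lower[where f=f, OF cS uS lip] by blast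
  moreover have "dist_in E S u b = d b" using dh[OF SV cS uS] by (simp add: d_def)
  moreover have "u \<noteq> b" using db ds d_u by auto
  ultimately show False using db d_u by (simp add: f_def)
qed

lemma chain:
  assumes bv: "E b v" and ddw: "E dd w" and bs: "E b s" and dds: "E dd s"
    and nvdd: "\<not> E v dd" and nwb: "\<not> E w b" and av: "E a v" and aw: "E a w"
    and dvw: "d v = d w" and ds: "d s + 2 = d v" and db: "d b + 1 = d v" and ddd: "d dd + 1 = d v"
  shows False
proof -
  have V: "v \<in> V" "b \<in> V" "s \<in> V" "dd \<in> V" "w \<in> V" using inV assms by auto
  have vw: "v \<noteq> w" using nvdd ddw sym by blast
  have walk: "walk_in E V [v, b, s, dd, w] v w"
    using V sym[OF bv] ddw bs sym[OF dds] unfolding walk_in_def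
    by (auto simp: less_Suc_eq nth_Cons split: nat.splits)
  define S where "S = set [v, b, s, dd, w]"
  have SV: "S \<subseteq> V" using V by (auto simp: S_def)
  have PS: "walk_in E S [v, b, s, dd, w] v w" using walk_set[OF walk] S_def by blast
  have cS: "connected_on E S" using connected_by_list[where E=E, OF sym PS] S_def by blast
  have vS: "v \<in> S" "w \<in> S" by (auto simp: S_def)
  define f where "f x = (if x = v then 0 else if x = b then 1 else if x = s then 2
     else if x = dd then 3 else (4::int))" for x
  have ne: "E v s \<Longrightarrow> False" "E s w \<Longrightarrow> False" "E v w \<Longrightarrow> False" "E b dd \<Longrightarrow> False"
    using d_adj[of v s] d_adj[of s w] d_adj[of v w] d_adj[of b dd] ds dvw db ddd by auto
  have dist: "v \<noteq> b" "v \<noteq> s" "v \<noteq> dd" "b \<noteq> s" "b \<noteq> w" "s \<noteq> dd" "s \<noteq> w" "dd \<noteq> w"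
    "b \<noteq> dd"
    using ds dvw db ddd sym[OF bv] nvdd by auto
  have lip: "f y \<le> f x + 1" if "x \<in> S" "y \<in> S" "E x y" for x y
  proof -
    have "x = v \<or> x = b \<or> x = s \<or> x = dd \<or> x = w" "y = v \<or> y = b \<or> y = s \<or> y = dd \<or> y = w"
      using that by (auto simp: S_def)
    then show ?thesis using that(3) ne nvdd nwb irr sym[of b w] sym[of dd v] sym[of s v] sym[of w s] sym[of w v] sym[of dd b]
      by (elim disjE) (simp_all add: f_def dist dist[THEN not_sym] vw vw[THEN not_sym])
  qed
  have "f w \<le> f v + int (dist_in E S v w)" using dist_lower[where f=f, OF cS vS lip] by blast
  moreover have "dist_in E S v w = dist_in E V v w" using dh[OF SV cS vS] .
  moreover have "walk_in E V [v, a, w] v w"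
    using V sym[OF av] aw inV[OF av] unfolding walk_in_def by (auto simp: less_Suc_eq nth_Cons split: nat.splits)
  then have "dist_in E V v w \<le> 2" using dist_le by fastforce
  ultimately show False using vw dist by (simp add: f_def)
qed

end


context bdhg begin

lemma nbhd_iff: "y \<in> nbhd V E x \<longleftrightarrow> E x y"
  using inV by (auto simp: nbhd_def)

lemma fin_nbhd: "finite (nbhd V E x)" using finV by (simp add: nbhd_def)

lemma prune:
  "\<exists>z\<in>V. connected_on E (V - {z}) \<and> ((\<exists>q. nbhd V E z \<subseteq> {q}) \<or>
     (\<exists>z'\<in>V. z' \<noteq> z \<and> nbhd V E z' = nbhd V E z \<and> nbhd V E z \<noteq> {}))"
proof -
  define N where "N x = nbhd V E x" for x
  have Niff: "y \<in> N x \<longleftrightarrow> E x y" for x y by (simp add: N_def nbhd_iff)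
  define k where "k = Max (d ` V)"
  have dk: "x \<in> V \<Longrightarrow> d x \<le> k" for x using finV by (simp add: k_def)
  define L where "L = {x\<in>V. d x = k}"
  have "k \<in> d ` V" unfolding k_def using finV u by (intro Max_in) auto
  then have Lne: "L \<noteq> {}" by (auto simp: L_def)
  have Lfin: "finite L" using finV by (simp add: L_def)
  define v where "v = arg_min_on (\<lambda>x. card (N x)) L"
  have vL: "v \<in> L" and vmin: "\<And>w. w \<in> L \<Longrightarrow> card (N v) \<le> card (N w)"
    using arg_min_if_finite[OF Lfin Lne, of "\<lambda>x. card (N x)"] by (auto simp: v_def not_less)
  have vV: "v \<in> V" and dv: "d v = k" using vL by (auto simp: L_def)
  have down: "E x y \<Longrightarrow> d x = k \<Longrightarrow> d y + 1 = k" for x y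
    using d_adj[of x y] dk[of y] inV by force
  show ?thesis
  proof (cases "card (N v) \<le> 1")
    case True
    then obtain q where q: "N v \<subseteq> {q}"
      using card_le_Suc0_iff_eq[OF fin_nbhd[of v]] unfolding N_def by (metis One_nat_def insertCI subsetI)
    have "connected_on E (V - {v})"
    proof (cases "u = v")
      case True
      then have "V - {v} = {}" using d0 dk d_u dv by fastforce
      then show ?thesis unfolding connected_on_def by blast
    next
      case False
      show ?thesis
      proof (rule connected_by_walk[where E=E, OF sym])
        fix x assume x: "x \<in> V - {v}"
        then obtain p where p: "walk_in E V p u x" "length p = Suc (d x)" using dwalk by blast
        have "v \<notin> set p"
        proof
          assume "v \<in> set p"
          then obtain i where i: "i < length p" "v = p ! i" by (metis in_set_conv_nth)
          have "d v \<le> i" using d_nth[OF p(1) i(1)] i by simp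
          then have "i = length p - 1" using i p dk[of x] x dv by auto
          then show False using i p x by (metis DiffD2 last_conv_nth singletonI walk_in_def)
        qed
        then show "\<exists>p. walk_in E (V - {v}) p u x" using p walk_set[OF p(1)] by (auto simp: walk_in_def)
      qed
    qed
    then show ?thesis using vV q N_def by blast
  next
    case False
    then have "card (N v) \<ge> 2" by simp
    then obtain a b where ab: "a \<in> N v" "b \<in> N v" "a \<noteq> b"
      by (metis One_nat_def card_le_Suc0_iff_eq[OF fin_nbhd[of v]] N_def False le_SucI numeral_2_eq_2 not_less_eq_eq)
    have key: "N a \<subseteq> N b" if av: "E v a" and bv: "E v b" and ab: "a \<noteq> b" for a b
    proof
      fix x assume "x \<in> N a"
      then have ax: "E a x" by (simp add: Niff)
      have da: "d a + 1 = k" and db: "d b + 1 = k" using down av bv dv by auto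
      have aV: "a \<in> V" "b \<in> V" using inV av bv by auto
      have "d a \<noteq> 0"
      proof
        assume "d a = 0"
        then have "d b = 0" using da db by simp
        then show False using d0[OF aV(1) \<open>d a = 0\<close>] d0[OF aV(2)] ab by simp
      qed
      have dvs: "d v = Suc (d a)" using dv da by simp
      consider "d x = Suc (d a)" | "d x + 1 = d a" using d_adj[OF ax] by auto
      then show "x \<in> N b"
      proof cases
        case 2
        then show ?thesis using up[OF sym[OF av] sym[OF bv] refl _ dvs ax 2] da db by (simp add: Niff)
      next
        case 1
        show ?thesis
        proof (rule ccontr)
          assume nb: "x \<notin> N b"
          then have xv: "x \<noteq> v" using bv sym Niff by blast
          have xL: "x \<in> L" using 1 da inV ax by (auto simp: L_def)
          have "\<exists>dd. E x dd \<and> \<not> E v dd"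
          proof (rule ccontr)
            assume "\<not> ?thesis"
            then have "N x \<subseteq> N v" by (auto simp: Niff)
            moreover have "b \<in> N v" "b \<notin> N x" using bv nb sym Niff by blast+
            ultimately have "N x \<subset> N v" by blast
            then have "card (N x) < card (N v)" using psubset_card_mono fin_nbhd N_def by metis
            then show False using vmin[OF xL] by simp
          qed
          then obtain dd where xdd: "E x dd" and nvdd: "\<not> E v dd" by blast
          have ddd: "d dd + 1 = k" using down xdd 1 da by simp
          obtain s where sa: "E s a" and ds: "d s + 1 = d a" using pred[of a] aV \<open>d a \<noteq> 0\<close> by auto
          have bs: "E b s" using up[OF sym[OF av] sym[OF bv] refl _ dvs sym[OF sa] ds] da db by simp
          have dds: "E dd s" using up[OF ax sym[OF xdd] refl _ 1 sym[OF sa] ds] da ddd by simp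
          show False
            using chain[OF sym[OF bv] sym[OF xdd] bs dds nvdd _ sym[OF av] ax] nb sym[of x b] 1 dv da db ddd ds
            by (cases "E x b") (simp_all add: Niff)
        qed
      qed
    qed
    have Nab: "N a = N b" using key ab by (auto simp: Niff)
    have abV: "a \<in> V" "b \<in> V" using ab inV by (auto simp: Niff)
    have "connected_on E (V - {b})"
      unfolding connected_on_def
    proof (intro ballI)
      fix x y assume xy: "x \<in> V - {b}" "y \<in> V - {b}"
      then obtain p where p: "walk_in E V p x y" using conn by (auto simp: connected_on_def)
      define g where "g t = (if t = b then a else t)" for t
      have ge: "E (g s) (g t)" if "E s t" for s t
      proof -
        have ba: "E b t \<Longrightarrow> E a t" for t using Nab by (auto simp: Niff)
        show ?thesis
        proof (cases "s = b")
          case True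
          then have "t \<noteq> b" using that irr by blast
          then show ?thesis using True ba that unfolding g_def by simp
        next
          case False
          show ?thesis
          proof (cases "t = b")
            case True
            then have "E a s" using ba sym that by blast
            then show ?thesis using True False sym unfolding g_def by simp
          qed (use False that in \<open>simp add: g_def\<close>)
        qed
      qed
      have "walk_in E (V - {b}) (map g p) x y"
        unfolding walk_in_def
      proof (intro conjI allI impI)
        show "map g p \<noteq> []" "hd (map g p) = x" "last (map g p) = y" "set (map g p) \<subseteq> V - {b}"
          using p xy abV ab(3) unfolding walk_in_def by (auto simp: hd_map last_map g_def)
        fix i assume i: "Suc i < length (map g p)"
        then have "E (p ! i) (p ! Suc i)" using p by (simp add: walk_in_def)
        from ge[OF this] show "E (map g p ! i) (map g p ! Suc i)" using i by simp
      qed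
      then show "\<exists>p. walk_in E (V - {b}) p x y" by blast
    qed
    then show ?thesis using abV ab Nab N_def by blast
  qed
qed

end


fun arcs :: "'b list \<Rightarrow> ('b \<times> 'b) set" where
  "arcs (x # y # zs) = insert (x, y) (arcs (y # zs))"
| "arcs _ = {}"

lemma arcs_nth: "arcs vs = {(vs ! i, vs ! Suc i) | i. Suc i < length vs}"
proof (induction vs rule: arcs.induct)
  case (1 x y zs)
  have "{((x # y # zs) ! i, (x # y # zs) ! Suc i) | i. Suc i < length (x # y # zs)}
      = insert (x, y) {((y # zs) ! i, (y # zs) ! Suc i) | i. Suc i < length (y # zs)}"
    (is "?L = ?R")
  proof
    show "?L \<subseteq> ?R"
    proof
      fix e assume "e \<in> ?L"
      then obtain i where i: "e = ((x # y # zs) ! i, (x # y # zs) ! Suc i)" "Suc i < length (x # y # zs)" by blast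
      show "e \<in> ?R"
      proof (cases i)
        case 0 then show ?thesis using i by simp
      next
        case (Suc j) then show ?thesis using i by auto
      qed
    qed
  next
    show "?R \<subseteq> ?L"
    proof
      fix e assume "e \<in> ?R"
      then consider "e = (x, y)" | j where "e = ((y # zs) ! j, (y # zs) ! Suc j)" "Suc j < length (y # zs)" by blast
      then show "e \<in> ?L"
      proof cases
        case 1 then show ?thesis by (intro CollectI exI[of _ 0]) simp
      next
        case 2 then show ?thesis by (intro CollectI exI[of _ "Suc j"]) simp
      qed
    qed
  qed
  then show ?case using 1 by simp
next
  case "2_1" then show ?case by simp
next
  case ("2_2" v) then show ?case by simp
qed

lemma dipath_iff: "dipath_arcs W R P \<longleftrightarrow>
   (\<exists>vs. vs \<noteq> [] \<and> distinct vs \<and> set vs \<subseteq> W \<and> arcs vs \<subseteq> R \<and> P = arcs vs)"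
  unfolding dipath_arcs_def arcs_nth by blast

lemma arcs_append: "arcs (xs @ y # ys) = (if xs = [] then {} else insert (last xs, y) (arcs xs)) \<union> arcs (y # ys)"
proof (induction xs rule: arcs.induct)
  case (1 x y zs) then show ?case by auto
next
  case "2_1" then show ?case by simp
next
  case ("2_2" v) then show ?case by simp
qed

lemma arcs_set: "arcs vs \<subseteq> set vs \<times> set vs"
  by (induction vs rule: arcs.induct) auto

lemma arcs_split: "(a, b) \<in> arcs vs \<Longrightarrow> \<exists>xs ys. vs = xs @ a # b # ys"
proof (induction vs rule: arcs.induct)
  case (1 x y zs)
  show ?case
  proof (cases "(a, b) = (x, y)")
    case True then show ?thesis by (intro exI[of _ "[]"] exI[of _ zs]) auto
  next
    case False
    then obtain xs' ys' where "y # zs = xs' @ a # b # ys'" using 1 by auto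
    then show ?thesis by (intro exI[of _ "x # xs'"] exI[of _ ys']) auto
  qed
qed auto

lemma arcs_snoc: "vs \<noteq> [] \<Longrightarrow> arcs (vs @ [n]) = insert (last vs, n) (arcs vs)"
  using arcs_append[of vs n "[]"] by simp

lemma arcs_subdiv:
  assumes "distinct (xs @ a # b # ys)"
  shows "arcs (xs @ a # c # b # ys) = arcs (xs @ a # b # ys) - {(a, b)} \<union> {(a, c), (c, b)}"
proof -
  define X0 where "X0 = (if xs = [] then {} else insert (last xs, a) (arcs xs))"
  have "(a, b) \<notin> X0" using assms arcs_set[of xs] by (auto simp: X0_def)
  moreover have "(a, b) \<notin> arcs (b # ys)" using assms arcs_set[of "b # ys"] by auto
  ultimately show ?thesis
    by (auto simp: arcs_append[of xs a] X0_def[symmetric])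
qed

lemma dipath_mono: "dipath_arcs W R P \<Longrightarrow> W \<subseteq> W' \<Longrightarrow> R \<subseteq> R' \<Longrightarrow> dipath_arcs W' R' P"
  unfolding dipath_iff by blast

definition arb :: "'b set \<Rightarrow> ('b \<times> 'b) set \<Rightarrow> 'b \<Rightarrow> bool" where
  "arb W R r \<longleftrightarrow> arborescence W R r \<and> (\<forall>a. (a, a) \<notin> R)"

lemma add_leaf:
  assumes A: "arb W R r" and p: "p \<in> W" and n: "n \<notin> W"
  shows "arb (insert n W) (insert (p, n) R) r"
proof -
  have RW: "R \<subseteq> W \<times> W" and r: "r \<in> W" and fin: "finite W" and reach: "\<forall>w\<in>W. (r, w) \<in> R\<^sup>*"
    and root: "\<forall>u. (u, r) \<notin> R" and par: "\<forall>w\<in>W. w \<noteq> r \<longrightarrow> (\<exists>!u. (u, w) \<in> R)"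
    and nl: "\<forall>a. (a, a) \<notin> R"
    using A by (auto simp: arb_def arborescence_def)
  have mono: "R\<^sup>* \<subseteq> (insert (p, n) R)\<^sup>*" by (rule rtrancl_mono) blast
  have "(r, n) \<in> (insert (p, n) R)\<^sup>*"
    using reach p mono by (meson insertI1 rtrancl.rtrancl_into_rtrancl subsetD)
  then have reach': "\<forall>w\<in>insert n W. (r, w) \<in> (insert (p, n) R)\<^sup>*" using reach mono by blast
  have par': "\<forall>w\<in>insert n W. w \<noteq> r \<longrightarrow> (\<exists>!u. (u, w) \<in> insert (p, n) R)"
  proof (intro ballI impI)
    fix w assume w: "w \<in> insert n W" "w \<noteq> r"
    show "\<exists>!u. (u, w) \<in> insert (p, n) R"
    proof (cases "w = n")
      case True
      then show ?thesis using RW n by (intro ex1I[of _ p]) auto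
    next
      case False
      then show ?thesis using par w by auto
    qed
  qed
  show ?thesis
    unfolding arb_def arborescence_def
    using fin r RW p n root reach' par' nl by auto
qed

lemma subdivide:
  assumes A: "arb W R r" and ab: "(a, b) \<in> R" and c: "c \<notin> W"
  shows "arb (insert c W) (R - {(a, b)} \<union> {(a, c), (c, b)}) r"
proof -
  define R' where "R' = R - {(a, b)} \<union> {(a, c), (c, b)}"
  have RW: "R \<subseteq> W \<times> W" and r: "r \<in> W" and fin: "finite W" and reach: "\<forall>w\<in>W. (r, w) \<in> R\<^sup>*"
    and root: "\<forall>u. (u, r) \<notin> R" and par: "\<forall>w\<in>W. w \<noteq> r \<longrightarrow> (\<exists>!u. (u, w) \<in> R)"
    and nl: "\<forall>a. (a, a) \<notin> R"
    using A by (auto simp: arb_def arborescence_def)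
  have abW: "a \<in> W" "b \<in> W" using ab RW by auto
  have br: "b \<noteq> r" using root ab by auto
  have sub: "R \<subseteq> R'\<^sup>*"
  proof
    fix e assume e: "e \<in> R"
    show "e \<in> R'\<^sup>*"
    proof (cases "e = (a, b)")
      case True
      have "(a, c) \<in> R'\<^sup>*" "(c, b) \<in> R'\<^sup>*" by (auto simp: R'_def)
      then show ?thesis using True by (meson rtrancl_trans)
    next
      case False then show ?thesis using e by (auto simp: R'_def)
    qed
  qed
  have mono: "R\<^sup>* \<subseteq> R'\<^sup>*" using sub by (rule rtrancl_subset_rtrancl)
  have "(r, a) \<in> R'\<^sup>*" using reach abW mono by blast
  moreover have "(a, c) \<in> R'" by (simp add: R'_def)
  ultimately have "(r, c) \<in> R'\<^sup>*" by (rule rtrancl.rtrancl_into_rtrancl)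
  then have reach': "\<forall>w\<in>insert c W. (r, w) \<in> R'\<^sup>*" using reach mono by blast
  have aparent: "(x, b) \<in> R \<Longrightarrow> x = a" for x using par ab br abW by blast
  have par': "\<forall>w\<in>insert c W. w \<noteq> r \<longrightarrow> (\<exists>!u. (u, w) \<in> R')"
  proof (intro ballI impI)
    fix w assume w: "w \<in> insert c W" "w \<noteq> r"
    show "\<exists>!u. (u, w) \<in> R'"
    proof (cases "w = c")
      case True
      then show ?thesis using RW c abW by (intro ex1I[of _ a]) (auto simp: R'_def)
    next
      case False
      show ?thesis
      proof (cases "w = b")
        case True
        then show ?thesis using RW c abW aparent by (intro ex1I[of _ c]) (auto simp: R'_def)
      next
        case False
        then have "(x, w) \<in> R' \<longleftrightarrow> (x, w) \<in> R" for x using \<open>w \<noteq> c\<close> by (auto simp: R'_def)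
        then show ?thesis using par w \<open>w \<noteq> c\<close> by auto
      qed
    qed
  qed
  have "R' \<subseteq> insert c W \<times> insert c W" using RW abW by (auto simp: R'_def)
  moreover have "\<forall>u. (u, r) \<notin> R'" using root br c r by (auto simp: R'_def)
  moreover have "\<forall>x. (x, x) \<notin> R'" using nl c abW by (auto simp: R'_def)
  ultimately show ?thesis
    unfolding arb_def arborescence_def R'_def[symmetric]
    using fin r reach' par' by auto
qed

lemma bij_upd_insert:
  assumes "bij_betw f A B" "a \<notin> A" "b \<notin> B"
  shows "bij_betw (f(a := b)) (insert a A) (insert b B)"
proof -
  have "bij_betw (f(a := b)) A B" using assms by (metis bij_betw_cong fun_upd_other)
  then show ?thesis using assms by (simp add: bij_betw_def inj_on_def image_iff) (auto simp: image_iff)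
qed



lemma walk_restrict:
  assumes "z \<notin> S"
  shows "walk_in (\<lambda>x y. E x y \<and> x \<noteq> z \<and> y \<noteq> z) S p a b = walk_in E S p a b"
proof
  assume "walk_in (\<lambda>x y. E x y \<and> x \<noteq> z \<and> y \<noteq> z) S p a b"
  then show "walk_in E S p a b" by (auto simp: walk_in_def)
next
  assume w: "walk_in E S p a b"
  have "p ! i \<in> S" if "i < length p" for i using w that by (auto simp: walk_in_def)
  then show "walk_in (\<lambda>x y. E x y \<and> x \<noteq> z \<and> y \<noteq> z) S p a b"
    using w assms unfolding walk_in_def by (metis Suc_lessD)
qed

lemma conn_restrict: "z \<notin> S \<Longrightarrow> connected_on (\<lambda>x y. E x y \<and> x \<noteq> z \<and> y \<noteq> z) S = connected_on E S"
  by (simp add: connected_on_def walk_restrict)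

lemma dist_restrict: "z \<notin> S \<Longrightarrow> dist_in (\<lambda>x y. E x y \<and> x \<noteq> z \<and> y \<noteq> z) S a b = dist_in E S a b"
  by (simp add: dist_in_def walk_restrict)

lemma sub_graph:
  assumes cg: "connected_graph V E" and bdh: "BDH V E" and cc: "color_classes V E X Y"
    and z: "z \<in> V" and conn: "connected_on E (V - {z})"
  defines "E' \<equiv> (\<lambda>x y. E x y \<and> x \<noteq> z \<and> y \<noteq> z)"
  shows "connected_graph (V - {z}) E' \<and> BDH (V - {z}) E' \<and> color_classes (V - {z}) E' (X - {z}) (Y - {z})"
proof -
  have sg: "simple_graph (V - {z}) E'" using cg unfolding E'_def connected_graph_def simple_graph_def by auto
  have c': "connected_on E' (V - {z})" using conn conn_restrict[of z "V - {z}" E] E'_def by simp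
  have cc': "color_classes (V - {z}) E' (X - {z}) (Y - {z})"
    using cc unfolding color_classes_def E'_def by blast
  have dh: "distance_hereditary (V - {z}) E'"
    unfolding distance_hereditary_def
  proof (intro conjI allI impI ballI sg)
    fix S a b assume S: "S \<subseteq> V - {z}" "connected_on E' S" "a \<in> S" "b \<in> S"
    have zS: "z \<notin> S" using S by auto
    have cS: "connected_on E S" using S(2) conn_restrict[OF zS, of E] E'_def by simp
    have "dist_in E' S a b = dist_in E S a b" using dist_restrict[OF zS] E'_def by simp
    also have "\<dots> = dist_in E V a b"
      using bdh S cS unfolding BDH_def distance_hereditary_def by blast
    also have "\<dots> = dist_in E (V - {z}) a b"
      using bdh S conn unfolding BDH_def distance_hereditary_def by (metis Diff_subset subsetD)
    also have "\<dots> = dist_in E' (V - {z}) a b" using dist_restrict[of z "V - {z}" E] E'_def by simp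
    finally show "dist_in E' S a b = dist_in E' (V - {z}) a b" .
  qed
  have "bipartite (V - {z}) E'" using cc' unfolding bipartite_def color_classes_def by blast
  then show ?thesis using sg c' cc' dh by (simp add: connected_graph_def BDH_def)
qed



lemma bij_remove:
  assumes "bij_betw f A B" "a \<in> A"
  shows "bij_betw f (A - {a}) (B - {f a})"
  using assms unfolding bij_betw_def inj_on_def by auto

lemma main:
  fixes V :: "'a set" and E :: "'a \<Rightarrow> 'a \<Rightarrow> bool"
  assumes "connected_graph V E" "BDH V E" "color_classes V E X Y"
  shows "\<exists>(W :: nat set) R r (\<phi> :: 'a \<Rightarrow> nat \<times> nat).
           arb W R r \<and> bij_betw \<phi> X R \<and> (\<forall>y\<in>Y. dipath_arcs W R (\<phi> ` nbhd V E y))"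
  using assms
proof (induction "card V" arbitrary: V E X Y rule: less_induct)
  case less
  note cg = less.prems(1) and bdh = less.prems(2) and cc = less.prems(3)
  have finV: "finite V" using cg by (simp add: connected_graph_def simple_graph_def)
  show ?case
  proof (cases "V = {}")
    case True
    then have "X = {}" "Y = {}" using cc by (auto simp: color_classes_def)
    moreover have "arb {0::nat} {} 0" by (simp add: arb_def arborescence_def)
    ultimately show ?thesis
      by (intro exI[of _ "{0::nat}"] exI[of _ "{}"] exI[of _ 0] exI[of _ "\<lambda>_. (0, 0)"]) (auto simp: bij_betw_def)
  next
    case False
    then obtain u where u: "u \<in> V" by blast
    interpret bdhg V E X Y u using cg bdh cc u by unfold_locales
    obtain z where zV: "z \<in> V" and connz: "connected_on E (V - {z})"
      and zcase: "(\<exists>q. nbhd V E z \<subseteq> {q}) \<or> (\<exists>z'\<in>V. z' \<noteq> z \<and> nbhd V E z' = nbhd V E z \<and> nbhd V E z \<noteq> {})"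
      using prune by blast
    define E' where "E' = (\<lambda>x y. E x y \<and> x \<noteq> z \<and> y \<noteq> z)"
    have sub: "connected_graph (V - {z}) E' \<and> BDH (V - {z}) E' \<and> color_classes (V - {z}) E' (X - {z}) (Y - {z})"
      using sub_graph[OF cg bdh cc zV connz] E'_def by simp
    have "card (V - {z}) < card V" using finV zV by (meson card_Diff1_less)
    then have "\<exists>(W :: nat set) R r (\<phi> :: 'a \<Rightarrow> nat \<times> nat).
           arb W R r \<and> bij_betw \<phi> (X - {z}) R \<and> (\<forall>y\<in>Y - {z}. dipath_arcs W R (\<phi> ` nbhd (V - {z}) E' y))"
      using less.hyps sub by blast
    then obtain W :: "nat set" and R r and \<phi> :: "'a \<Rightarrow> nat \<times> nat" where A: "arb W R r" and bij: "bij_betw \<phi> (X - {z}) R"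
      and paths: "\<forall>y\<in>Y - {z}. dipath_arcs W R (\<phi> ` nbhd (V - {z}) E' y)"
      by blast
    have nb': "nbhd (V - {z}) E' y = nbhd V E y - {z}" if "y \<noteq> z" for y
      using that by (auto simp: nbhd_def E'_def)
    have XY: "X \<union> Y = V" "X \<inter> Y = {}" and cls: "\<And>a b. E a b \<Longrightarrow> (a \<in> X \<and> b \<in> Y) \<or> (a \<in> Y \<and> b \<in> X)"
      using cc by (auto simp: color_classes_def)
    have finW: "finite W" and RW: "R \<subseteq> W \<times> W" and rW: "r \<in> W" and nl: "\<forall>a. (a, a) \<notin> R"
      using A by (auto simp: arb_def arborescence_def)
    obtain n :: nat where n: "n \<notin> W" using finW ex_new_if_finite infinite_UNIV_nat by blast
    have nbX: "nbhd V E y \<subseteq> X" if "y \<in> Y" for y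
      using that cls XY by (auto simp: nbhd_def)
    have nbY: "nbhd V E y \<subseteq> Y" if "y \<in> X" for y
      using that cls XY by (auto simp: nbhd_def)
    have inj: "inj_on \<phi> (X - {z})" using bij by (simp add: bij_betw_def)
    have phiR: "x \<in> X - {z} \<Longrightarrow> \<phi> x \<in> R" for x using bij by (auto simp: bij_betw_def)
    consider "z \<in> Y" | "z \<in> X" "z \<notin> Y" using zV XY by blast
    then show ?thesis
    proof cases
      case 1
      then have zX: "z \<notin> X" using XY by blast
      then have XX: "X - {z} = X" by simp
      have nbz: "nbhd V E y - {z} = nbhd V E y" if "y \<in> Y" for y
        using nbX[OF that] zX by blast
      have "dipath_arcs W R (\<phi> ` nbhd V E z)"
        using zcase
      proof
        assume "\<exists>q. nbhd V E z \<subseteq> {q}"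
        then obtain q where q: "nbhd V E z \<subseteq> {q}" by blast
        show ?thesis
        proof (cases "nbhd V E z = {}")
          case True
          show ?thesis unfolding dipath_iff True
            by (intro exI[of _ "[r]"]) (simp add: rW)
        next
          case False
          then have Nq: "nbhd V E z = {q}" using q by blast
          then have "q \<in> X - {z}" using nbX[OF 1] zX by blast
          then obtain a b where ab: "\<phi> q = (a, b)" "(a, b) \<in> R" using phiR by (metis prod.collapse)
          then have "a \<noteq> b" "a \<in> W" "b \<in> W" using nl RW by auto
          then show ?thesis unfolding dipath_iff Nq using ab
            by (intro exI[of _ "[a, b]"]) simp
        qed
      next
        assume "\<exists>z'\<in>V. z' \<noteq> z \<and> nbhd V E z' = nbhd V E z \<and> nbhd V E z \<noteq> {}"
        then obtain z' where z': "z' \<in> V" "z' \<noteq> z" "nbhd V E z' = nbhd V E z" "nbhd V E z \<noteq> {}" by blast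
        then obtain x where x: "x \<in> nbhd V E z'" by blast
        then have "x \<in> X" using z' nbX[OF 1] by blast
        moreover have "E z' x" using x by (simp add: nbhd_iff)
        ultimately have "z' \<in> Y" using cls XY by blast
        then have "dipath_arcs W R (\<phi> ` nbhd (V - {z}) E' z')" using paths z'(2) by blast
        moreover have "nbhd (V - {z}) E' z' = nbhd V E z" using nb'[OF z'(2)] nbz[OF \<open>z' \<in> Y\<close>] z'(3) by simp
        ultimately show ?thesis by simp
      qed
      then show ?thesis using A bij paths XX nb' nbz by (intro exI[of _ W] exI[of _ R] exI[of _ r] exI[of _ \<phi>]) auto
    next
      case 2
      have XX: "insert z (X - {z}) = X" using 2 by blast
      have zX': "z \<notin> X - {z}" by simp
      show ?thesis
        using zcase
      proof
        assume "\<exists>q. nbhd V E z \<subseteq> {q}"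
        then obtain q where q: "nbhd V E z \<subseteq> {q}" by blast
        have pn_new: "(p, n) \<notin> R" for p using RW n by auto
        have other: "dipath_arcs (insert n W) (insert (p, n) R) ((\<phi>(z := e)) ` nbhd V E y)"
          if y: "y \<in> Y" "z \<notin> nbhd V E y" for y p e
        proof -
          have yz: "y \<noteq> z" using y 2 by blast
          have "dipath_arcs W R (\<phi> ` nbhd (V - {z}) E' y)" using paths y yz by blast
          moreover have "nbhd (V - {z}) E' y = nbhd V E y" using nb'[OF yz] y(2) by blast
          ultimately have "dipath_arcs W R (\<phi> ` nbhd V E y)" by simp
          moreover have "(\<phi>(z := e)) ` nbhd V E y = \<phi> ` nbhd V E y" using y(2) by (auto simp: image_def)
          ultimately show ?thesis by (auto intro: dipath_mono)
        qed
        show ?thesis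
        proof (cases "nbhd V E z = {}")
          case True
          have "arb (insert n W) (insert (r, n) R) r" using add_leaf[OF A rW n] .
          moreover have "bij_betw (\<phi>(z := (r, n))) X (insert (r, n) R)"
            using bij_upd_insert[OF bij zX' pn_new] XX by simp
          moreover have "\<forall>y\<in>Y. dipath_arcs (insert n W) (insert (r, n) R) ((\<phi>(z := (r, n))) ` nbhd V E y)"
          proof
            fix y assume y: "y \<in> Y"
            have "z \<notin> nbhd V E y" using True by (metis empty_iff nbhd_iff sym)
            then show "dipath_arcs (insert n W) (insert (r, n) R) ((\<phi>(z := (r, n))) ` nbhd V E y)"
              using other y by blast
          qed
          ultimately show ?thesis by blast
        next
          case False
          then have Nq: "nbhd V E z = {q}" using q by blast
          then have qY: "q \<in> Y" and qz: "q \<noteq> z" using nbY[OF 2(1)] 2 by auto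
          obtain vs where vs: "vs \<noteq> []" "distinct vs" "set vs \<subseteq> W" "arcs vs \<subseteq> R"
            "\<phi> ` (nbhd V E q - {z}) = arcs vs"
          proof -
            have "dipath_arcs W R (\<phi> ` nbhd (V - {z}) E' q)" using paths qY qz by blast
            then show ?thesis using that nb'[OF qz] unfolding dipath_iff by auto
          qed
          define p where "p = last vs"
          have pW: "p \<in> W" using vs last_in_set unfolding p_def by blast
          have A2: "arb (insert n W) (insert (p, n) R) r" using add_leaf[OF A pW n] .
          moreover have "bij_betw (\<phi>(z := (p, n))) X (insert (p, n) R)"
            using bij_upd_insert[OF bij zX' pn_new] XX by simp
          moreover have "\<forall>y\<in>Y. dipath_arcs (insert n W) (insert (p, n) R) ((\<phi>(z := (p, n))) ` nbhd V E y)"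
          proof
            fix y assume y: "y \<in> Y"
            show "dipath_arcs (insert n W) (insert (p, n) R) ((\<phi>(z := (p, n))) ` nbhd V E y)"
            proof (cases "y = q")
              case False
              have "z \<notin> nbhd V E y" using False Nq by (metis nbhd_iff sym singletonD)
              then show ?thesis using other y by blast
            next
              case True
              have zq: "z \<in> nbhd V E q" using Nq by (metis nbhd_iff sym singletonI)
              have "(\<phi>(z := (p, n))) ` nbhd V E q = insert (p, n) (\<phi> ` (nbhd V E q - {z}))"
                using zq by (auto simp: image_def)
              also have "\<dots> = arcs (vs @ [n])" using vs arcs_snoc[OF vs(1)] p_def by simp
              finally have eq: "(\<phi>(z := (p, n))) ` nbhd V E q = arcs (vs @ [n])" .
              have "n \<notin> set vs" using vs n by blast
              then show ?thesis unfolding dipath_iff True eq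
                using vs arcs_snoc[OF vs(1)] p_def
                by (intro exI[of _ "vs @ [n]"]) auto
            qed
          qed
          ultimately show ?thesis by blast
        qed
      next
        assume "\<exists>z'\<in>V. z' \<noteq> z \<and> nbhd V E z' = nbhd V E z \<and> nbhd V E z \<noteq> {}"
        then obtain z' where z': "z' \<in> V" "z' \<noteq> z" "nbhd V E z' = nbhd V E z" "nbhd V E z \<noteq> {}" by blast
        then obtain x where x: "x \<in> nbhd V E z'" by blast
        then have "x \<in> Y" using z' nbY[OF 2(1)] by blast
        moreover have "E z' x" using x by (simp add: nbhd_iff)
        ultimately have z'X: "z' \<in> X" using cls XY by blast
        then have z'X': "z' \<in> X - {z}" using z' by blast
        obtain a b where ab: "\<phi> z' = (a, b)" using prod.exhaust by blast
        have abR: "(a, b) \<in> R" using phiR[OF z'X'] ab by simp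
        have abW: "a \<in> W" "b \<in> W" using abR RW by auto
        define c where "c = n"
        have c: "c \<notin> W" using n c_def by simp
        define R2 where "R2 = R - {(a, b)} \<union> {(a, c), (c, b)}"
        define \<psi> where "\<psi> = (\<phi>(z' := (a, c)))(z := (c, b))"
        have A2: "arb (insert c W) R2 r" using subdivide[OF A abR c] R2_def by simp
        have b1: "bij_betw \<phi> (X - {z} - {z'}) (R - {(a, b)})"
          using bij_remove[OF bij z'X'] ab by simp
        have b2: "bij_betw (\<phi>(z' := (a, c))) (insert z' (X - {z} - {z'})) (insert (a, c) (R - {(a, b)}))"
          by (rule bij_upd_insert[OF b1]) (use c RW in auto)
        have b3: "bij_betw \<psi> (insert z (insert z' (X - {z} - {z'}))) (insert (c, b) (insert (a, c) (R - {(a, b)})))"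
          unfolding \<psi>_def by (rule bij_upd_insert[OF b2]) (use c RW z' abW in auto)
        have "insert z (insert z' (X - {z} - {z'})) = X" using z'X 2 by blast
        moreover have "insert (c, b) (insert (a, c) (R - {(a, b)})) = R2" by (auto simp: R2_def)
        ultimately have bij2: "bij_betw \<psi> X R2" using b3 by simp
        have paths2: "dipath_arcs (insert c W) R2 (\<psi> ` nbhd V E y)" if y: "y \<in> Y" for y
        proof -
          have yz: "y \<noteq> z" "y \<noteq> z'" using y 2 z'X XY by auto
          define N where "N = nbhd V E y - {z}"
          have NX: "N \<subseteq> X - {z}" using nbX[OF y] by (auto simp: N_def)
          have "dipath_arcs W R (\<phi> ` nbhd (V - {z}) E' y)" using paths y yz by blast
          then obtain vs where vs: "vs \<noteq> []" "distinct vs" "set vs \<subseteq> W" "arcs vs \<subseteq> R"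
            "\<phi> ` N = arcs vs"
            using nb'[OF yz(1)] unfolding dipath_iff N_def by auto
          have "E y z \<longleftrightarrow> y \<in> nbhd V E z" using sym nbhd_iff by blast
          also have "\<dots> \<longleftrightarrow> y \<in> nbhd V E z'" using z'(3) by simp
          also have "\<dots> \<longleftrightarrow> E y z'" using sym nbhd_iff by blast
          finally have zz': "E y z \<longleftrightarrow> E y z'" .
          show ?thesis
          proof (cases "E y z'")
            case True
            then have z'N: "z' \<in> N" using yz z'(2) by (auto simp: N_def nbhd_iff)
            have Nfull: "nbhd V E y = insert z N" using True zz' by (auto simp: N_def nbhd_iff)
            have zN: "z \<notin> N" by (simp add: N_def)
            have "\<phi> z' \<in> \<phi> ` N" using z'N by (rule imageI)
            then have "(a, b) \<in> arcs vs" using ab vs(5) by simp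
            from arcs_split[OF this] obtain xs ys where split: "vs = xs @ a # b # ys" by blast
            define vs2 where "vs2 = xs @ a # c # b # ys"
            have arcs2: "arcs vs2 = arcs vs - {(a, b)} \<union> {(a, c), (c, b)}"
              using arcs_subdiv[of xs a b ys c] vs(2) split vs2_def by simp
            have im: "\<psi> ` (N - {z'}) = \<phi> ` (N - {z'})" using zN by (intro image_cong) (auto simp: \<psi>_def)
            have NN: "nbhd V E y = insert z (insert z' (N - {z'}))" using Nfull z'N by blast
            have pz: "\<psi> z = (c, b)" "\<psi> z' = (a, c)" using z'(2) by (auto simp: \<psi>_def)
            have sN: "\<phi> ` (N - {z'}) = \<phi> ` N - {(a, b)}"
            proof -
              have "N - {z'} \<subseteq> X - {z}" "{z'} \<subseteq> X - {z}" using NX z'X' by auto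
              from inj_on_image_set_diff[OF inj this] show ?thesis using ab by simp
            qed
            have "\<psi> ` nbhd V E y = insert (c, b) (insert (a, c) (\<phi> ` (N - {z'})))"
              unfolding NN image_insert pz im ..
            then have eq: "\<psi> ` nbhd V E y = arcs vs2" unfolding sN arcs2 vs(5) by blast
            have "c \<notin> set vs" using vs c by blast
            then have "distinct vs2" "set vs2 \<subseteq> insert c W" using vs split vs2_def by auto
            moreover have "arcs vs2 \<subseteq> R2" using arcs2 vs(4) by (auto simp: R2_def)
            ultimately show ?thesis unfolding dipath_iff eq
              by (intro exI[of _ vs2]) (auto simp: vs2_def)
          next
            case False
            then have "z \<notin> nbhd V E y" "z' \<notin> nbhd V E y" using zz' by (auto simp: nbhd_iff)
            then have Nfull: "nbhd V E y = N" and z'N: "z' \<notin> N" by (auto simp: N_def)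
            have "\<psi> ` nbhd V E y = \<phi> ` N" using \<open>z \<notin> nbhd V E y\<close> z'N Nfull unfolding \<psi>_def
              by (auto simp: image_def)
            moreover have "(a, b) \<notin> \<phi> ` N"
            proof
              assume "(a, b) \<in> \<phi> ` N"
              then obtain w where "w \<in> N" "\<phi> w = \<phi> z'" using ab by auto
              then have "w = z'" using inj NX z'X' by (meson inj_on_def subsetD)
              then show False using z'N \<open>w \<in> N\<close> by simp
            qed
            ultimately have "dipath_arcs W (R - {(a, b)}) (\<psi> ` nbhd V E y)"
              unfolding dipath_iff using vs by (intro exI[of _ vs]) auto
            then show ?thesis by (rule dipath_mono) (auto simp: R2_def)
          qed
        qed
        show ?thesis using A2 bij2 paths2 by blast
      qed
    qed
  qed
qed


theorem corollary2:
  fixes V :: "'a set" and E :: "'a \<Rightarrow> 'a \<Rightarrow> bool" and X Y :: "'a set"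
  assumes "connected_graph V E"
    and "BDH V E"
    and "color_classes V E X Y"
  shows "\<exists>(W :: nat set) R r (\<phi> :: 'a \<Rightarrow> nat \<times> nat).
           arborescence W R r \<and> bij_betw \<phi> X R \<and>
           (\<forall>y\<in>Y. dipath_arcs W R (\<phi> ` nbhd V E y))"
  using main[OF assms] unfolding arb_def by blast

end
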